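(* In the $m$-type setting described in the context: (1) if $x_i>1$ for every type $i$, then diffusion occurs from a small seed; (2) if $x_i\le1$ for every type $i$, then diffusion does not occur from a small seed; (3) if there is some type $i$ with $\pi_{ii}x_i>1$, then diffusion occurs from a small seed; (4) if there is a nonempty subset of types $S\subseteq\{1,\dots,m\}$ such that $\sum_{j\in S}\pi_{ij}x_j>1$ for each $i\in S$, then diffusion occurs from a small seed.
   Context: There are $m\ge1$ types. $\Pi=(\pi_{ij})$ is a nonnegative row-stochastic primitive $m\times m$ matrix ($\pi_{ij}$ is the probability that a meeting of a type-$i$ agent is with a type-$j$ agent). For each type $i$: $P_i$ is a degree distribution on the nonnegative integers; $w_i(d)>0$ are degree weights; $f_i(d,a)$, $g_i(d,a)$ ($0\le a\le d$) are adoption and abandonment rates satisfying: $f_i(d,0)=0$; $f_i(d,a)$ nondecreasing in $a$; $f_i(d,1)>0$ for some $d$ with $P_i(d)>0$; $g_i(d,0)>0$; $g_i(d,a)$ nonincreasing in $a$. Let $x_i=\sum_dP_i(d)w_i(d)\,d\,\frac{f_i(d,1)}{g_i(d,0)}$, assumed finite; it is positive. $A$ is the $m\times m$ matrix with $A_{ij}=\pi_{ij}x_j$. Diffusion occurs from a small seed means: for every $\varepsilon>0$ there exists $v\in\mathbb{R}^m$ with $0<v_i<\varepsilon$ and $(Av)_i>v_i$ for all $i$. (The condition $x_i>1$ corresponds to diffusion within type $i$ when isolated.) *)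

theory Defs
  imports "HOL-Analysis.Analysis"
begin

text \<open>Types are indexed by 0,...,m-1. Square m x m matrices are functions nat => nat => real,
  only entries with indices < m are relevant.\<close>

definition mat_mult :: "nat \<Rightarrow> (nat \<Rightarrow> nat \<Rightarrow> real) \<Rightarrow> (nat \<Rightarrow> nat \<Rightarrow> real) \<Rightarrow> (nat \<Rightarrow> nat \<Rightarrow> real)" where
  "mat_mult m M N = (\<lambda>i j. \<Sum>k<m. M i k * N k j)"

fun mat_pow :: "nat \<Rightarrow> (nat \<Rightarrow> nat \<Rightarrow> real) \<Rightarrow> nat \<Rightarrow> (nat \<Rightarrow> nat \<Rightarrow> real)" where
  "mat_pow m M 0 = (\<lambda>i j. if i = j then 1 else 0)"
| "mat_pow m M (Suc n) = mat_mult m (mat_pow m M n) M"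

definition row_stochastic :: "nat \<Rightarrow> (nat \<Rightarrow> nat \<Rightarrow> real) \<Rightarrow> bool" where
  "row_stochastic m M \<longleftrightarrow> (\<forall>i<m. \<forall>j<m. M i j \<ge> 0) \<and> (\<forall>i<m. (\<Sum>j<m. M i j) = 1)"

definition primitive :: "nat \<Rightarrow> (nat \<Rightarrow> nat \<Rightarrow> real) \<Rightarrow> bool" where
  "primitive m M \<longleftrightarrow> (\<forall>i<m. \<forall>j<m. M i j \<ge> 0) \<and> (\<exists>k. \<forall>i<m. \<forall>j<m. mat_pow m M k i j > 0)"

definition degree_distribution :: "(nat \<Rightarrow> real) \<Rightarrow> bool" where
  "degree_distribution p \<longleftrightarrow> (\<forall>d. p d \<ge> 0) \<and> p sums 1"

text \<open>Conditions on adoption rates f(d,a) and abandonment rates g(d,a), 0 <= a <= d, for one type.\<close>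
definition rate_conditions :: "(nat \<Rightarrow> real) \<Rightarrow> (nat \<Rightarrow> nat \<Rightarrow> real) \<Rightarrow> (nat \<Rightarrow> nat \<Rightarrow> real) \<Rightarrow> bool" where
  "rate_conditions p f g \<longleftrightarrow>
     (\<forall>d. f d 0 = 0)
   \<and> (\<forall>d a b. a \<le> b \<and> b \<le> d \<longrightarrow> f d a \<le> f d b)
   \<and> (\<exists>d. 1 \<le> d \<and> p d > 0 \<and> f d 1 > 0)
   \<and> (\<forall>d. g d 0 > 0)
   \<and> (\<forall>d a b. a \<le> b \<and> b \<le> d \<longrightarrow> g d b \<le> g d a)"

definition x_term :: "(nat \<Rightarrow> real) \<Rightarrow> (nat \<Rightarrow> real) \<Rightarrow> (nat \<Rightarrow> nat \<Rightarrow> real) \<Rightarrow> (nat \<Rightarrow> nat \<Rightarrow> real) \<Rightarrow> nat \<Rightarrow> real" where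
  "x_term p w f g d = p d * w d * real d * f d 1 / g d 0"

definition xval :: "(nat \<Rightarrow> real) \<Rightarrow> (nat \<Rightarrow> real) \<Rightarrow> (nat \<Rightarrow> nat \<Rightarrow> real) \<Rightarrow> (nat \<Rightarrow> nat \<Rightarrow> real) \<Rightarrow> real" where
  "xval p w f g = (\<Sum>d. x_term p w f g d)"

definition diffusion_small_seed :: "nat \<Rightarrow> (nat \<Rightarrow> nat \<Rightarrow> real) \<Rightarrow> bool" where
  "diffusion_small_seed m A \<longleftrightarrow>
     (\<forall>\<epsilon>>0. \<exists>v :: nat \<Rightarrow> real. \<forall>i<m. 0 < v i \<and> v i < \<epsilon> \<and> (\<Sum>j<m. A i j * v j) > v i)"

end

theory Submission
  imports Defs
begin


definition mv :: "nat \<Rightarrow> (nat\<Rightarrow>nat\<Rightarrow>real) \<Rightarrow> (nat\<Rightarrow>real) \<Rightarrow> nat \<Rightarrow> real" where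
  "mv m M u = (\<lambda>i. \<Sum>j<m. M i j * u j)"

lemma mv_mult: "mv m (mat_mult m M N) u i = mv m M (mv m N u) i"
proof -
  have "mv m (mat_mult m M N) u i = (\<Sum>j<m. \<Sum>k<m. M i k * N k j * u j)"
    by (simp add: mv_def mat_mult_def sum_distrib_right)
  also have "\<dots> = (\<Sum>k<m. \<Sum>j<m. M i k * (N k j * u j))"
    by (subst sum.swap) (simp add: mult.assoc)
  also have "\<dots> = mv m M (mv m N u) i"
    by (simp add: mv_def sum_distrib_left)
  finally show ?thesis .
qed

lemma mv_cong: "(\<And>j. j < m \<Longrightarrow> u j = u' j) \<Longrightarrow> mv m M u i = mv m M u' i"
  by (simp add: mv_def)

lemma pow_mv: "i < m \<Longrightarrow> (mv m M ^^ n) u i = mv m (mat_pow m M n) u i"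
proof (induction n arbitrary: u i)
  case 0
  have "mv m (mat_pow m M 0) u i = (\<Sum>j<m. if i = j then u j else 0)"
    unfolding mv_def mat_pow.simps by (rule sum.cong) auto
  then show ?case using 0 by simp
next
  case (Suc n)
  have "(mv m M ^^ Suc n) u i = (mv m M ^^ n) (mv m M u) i"
    by (simp add: funpow_Suc_right del: funpow.simps)
  also have "\<dots> = mv m (mat_pow m M n) (mv m M u) i" using Suc by blast
  also have "\<dots> = mv m (mat_pow m M (Suc n)) u i" by (simp add: mv_mult)
  finally show ?case .
qed

lemma mv_mono:
  assumes "\<forall>i<m. \<forall>j<m. M i j \<ge> 0" "\<forall>j<m. u j \<le> u' j" "i < m"
  shows "mv m M u i \<le> mv m M u' i"
  unfolding mv_def using assms by (auto intro!: sum_mono mult_left_mono)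

lemma mv_sum: "mv m M (\<lambda>i. \<Sum>n\<in>N. F n i) i = (\<Sum>n\<in>N. mv m M (F n) i)"
  unfolding mv_def by (simp add: sum_distrib_left sum.swap[of _ N])

lemma diffusion_from_vec:
  assumes "\<forall>i<m. 0 < v i \<and> v i < mv m A v i"
  shows "diffusion_small_seed m A"
  unfolding diffusion_small_seed_def
proof (intro allI impI)
  fix \<epsilon> :: real assume e: "\<epsilon> > 0"
  define s where "s = 1 + (\<Sum>i<m. v i)"
  have sn: "(\<Sum>i<m. v i) \<ge> 0" using assms by (auto intro: sum_nonneg less_imp_le)
  hence s0: "s > 0" by (simp add: s_def)
  define t where "t = \<epsilon> / s"
  have t0: "t > 0" using e s0 by (simp add: t_def)
  show "\<exists>v'. \<forall>i<m. 0 < v' i \<and> v' i < \<epsilon> \<and> (\<Sum>j<m. A i j * v' j) > v' i"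
  proof (intro exI[of _ "\<lambda>j. t * v j"] allI impI conjI)
    fix i assume i: "i < m"
    show "0 < t * v i" using t0 assms i by simp
    have "v i \<le> (\<Sum>i<m. v i)"
      by (rule member_le_sum) (use assms i in \<open>auto intro: less_imp_le\<close>)
    hence "v i < s" by (simp add: s_def)
    hence "v i / s < 1" using s0 by simp
    hence "\<epsilon> * (v i / s) < \<epsilon> * 1" using e by (rule mult_strict_left_mono)
    moreover have "t * v i = \<epsilon> * (v i / s)" by (simp add: t_def)
    ultimately show "t * v i < \<epsilon>" by simp
    have "(\<Sum>j<m. A i j * (t * v j)) = t * mv m A v i"
      by (simp add: mv_def sum_distrib_left algebra_simps)
    thus "(\<Sum>j<m. A i j * (t * v j)) > t * v i" using assms i t0 by simp
  qed
qed

lemma core: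
  assumes nn: "\<forall>i<m. \<forall>j<m. A i j \<ge> 0"
    and pos: "\<forall>i<m. \<forall>j<m. mat_pow m A k i j > 0"
    and Sne: "S \<noteq> {}" and Ssub: "S \<subseteq> {..<m}" and Sgt: "\<forall>i\<in>S. (\<Sum>j\<in>S. A i j) > 1"
  shows "\<exists>v. \<forall>i<m. 0 < v i \<and> v i < mv m A v i"
proof -
  define u where "u = (\<lambda>j. if j \<in> S then 1 else 0::real)"
  define F where "F = mv m A"
  have Fu: "F u i = (\<Sum>j\<in>S. A i j)" for i
  proof -
    have "F u i = (\<Sum>j<m. if j \<in> S then A i j else 0)"
      unfolding F_def mv_def u_def by (rule sum.cong) auto
    also have "\<dots> = (\<Sum>j\<in>{..<m} \<inter> S. A i j)" by (simp add: sum.inter_restrict)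
    also have "{..<m} \<inter> S = S" using Ssub by auto
    finally show ?thesis .
  qed
  have u0: "u i \<ge> 0" for i by (simp add: u_def)
  have strictS: "u i < F u i" if "i \<in> S" for i using Sgt that unfolding Fu by (simp add: u_def)
  have u_le: "u i \<le> F u i" if "i < m" for i
  proof (cases "i \<in> S")
    case True then show ?thesis using strictS by fastforce
  next
    case False
    have "0 \<le> (\<Sum>j\<in>S. A i j)" using nn that Ssub by (intro sum_nonneg) auto
    then show ?thesis using False unfolding Fu by (simp add: u_def)
  qed
  have incr: "\<forall>i<m. (F^^n) u i \<le> (F^^Suc n) u i" for n
  proof (induction n)
    case 0 then show ?case using u_le by simp
  next
    case (Suc n)
    show ?case unfolding funpow.simps(2) o_def
      using mv_mono[OF nn, of "(F^^n) u" "(F^^Suc n) u"] Suc F_def by simp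
  qed
  have mono: "(F^^n) u i \<le> (F^^(n+d)) u i" if "i < m" for n d i
  proof (induction d)
    case 0 then show ?case by simp
  next
    case (Suc d) then show ?case using incr[of "n+d"] that by (simp del: funpow.simps) (smt (verit))
  qed
  have nonneg: "(F^^n) u i \<ge> 0" if "i < m" for n i
    using mono[OF that, of 0 n] u0[of i] by simp
  obtain j0 where j0: "j0 \<in> S" using Sne by blast
  have j0m: "j0 < m" using j0 Ssub by auto
  have posk: "(F^^k) u i > 0" if i: "i < m" for i
  proof -
    have "(F^^k) u i = mv m (mat_pow m A k) u i" unfolding F_def by (rule pow_mv[OF i])
    also have "\<dots> = (\<Sum>j<m. mat_pow m A k i j * u j)" by (simp add: mv_def)
    also have "\<dots> \<ge> mat_pow m A k i j0 * u j0"
      by (rule member_le_sum) (use j0m in simp, use pos i u0 in \<open>meson Diff_iff lessThan_iff less_imp_le mult_nonneg_nonneg\<close>, simp)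
    finally have "mat_pow m A k i j0 * u j0 \<le> (F^^k) u i" .
    moreover have "u j0 = 1" using j0 by (simp add: u_def)
    ultimately show ?thesis using pos i j0m by force
  qed
  define v where "v = (\<lambda>i. \<Sum>n<Suc k. (F^^n) u i)"
  show ?thesis
  proof (intro exI[of _ v] allI impI conjI)
    fix i assume i: "i < m"
    have "(F^^k) u i \<le> v i" unfolding v_def
      by (rule member_le_sum) (use nonneg i in auto)
    thus "0 < v i" using posk[OF i] by simp
    have "mv m A v i = (\<Sum>n<Suc k. (F^^Suc n) u i)"
      unfolding v_def F_def by (subst mv_sum) simp
    hence "mv m A v i - v i = (\<Sum>n<Suc k. (F^^Suc n) u i - (F^^n) u i)"
      by (simp add: v_def sum_subtractf)
    also have "\<dots> = (F^^Suc k) u i - u i"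
      by (subst sum_lessThan_telescope[of "\<lambda>n. (F^^n) u i"]) simp
    finally have eq: "mv m A v i - v i = (F^^Suc k) u i - u i" .
    have "u i < (F^^Suc k) u i"
    proof (cases "i \<in> S")
      case True
      have "(F^^1) u i \<le> (F^^(1+k)) u i" by (rule mono[OF i])
      then show ?thesis using strictS[OF True] by simp
    next
      case False
      have "(F^^k) u i \<le> (F^^(k+1)) u i" by (rule mono[OF i])
      then show ?thesis using posk[OF i] False by (simp add: u_def)
    qed
    with eq show "v i < mv m A v i" by simp
  qed
qed


theorem corollary3:
  fixes m :: nat
    and Pm :: "nat \<Rightarrow> nat \<Rightarrow> real"
    and P :: "nat \<Rightarrow> nat \<Rightarrow> real"
    and w :: "nat \<Rightarrow> nat \<Rightarrow> real"
    and f g :: "nat \<Rightarrow> nat \<Rightarrow> nat \<Rightarrow> real"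
  assumes m_pos: "m \<ge> 1"
    and stoch: "row_stochastic m Pm"
    and prim: "primitive m Pm"
    and degdist: "\<forall>i<m. degree_distribution (P i)"
    and wpos: "\<forall>i<m. \<forall>d. w i d > 0"
    and rates: "\<forall>i<m. rate_conditions (P i) (f i) (g i)"
    and xfin: "\<forall>i<m. summable (x_term (P i) (w i) (f i) (g i))"
  defines "x \<equiv> (\<lambda>i. xval (P i) (w i) (f i) (g i))"
    and "A \<equiv> (\<lambda>i j. Pm i j * xval (P j) (w j) (f j) (g j))"
  shows "((\<forall>i<m. x i > 1) \<longrightarrow> diffusion_small_seed m A)
       \<and> ((\<forall>i<m. x i \<le> 1) \<longrightarrow> \<not> diffusion_small_seed m A)
       \<and> ((\<exists>i<m. Pm i i * x i > 1) \<longrightarrow> diffusion_small_seed m A)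
       \<and> ((\<exists>S. S \<noteq> {} \<and> S \<subseteq> {..<m} \<and> (\<forall>i\<in>S. (\<Sum>j\<in>S. Pm i j * x j) > 1))
            \<longrightarrow> diffusion_small_seed m A)"
proof -
  have Pnn: "\<forall>i<m. \<forall>j<m. Pm i j \<ge> 0" using stoch by (simp add: row_stochastic_def)
  have Psum: "\<And>i. i < m \<Longrightarrow> (\<Sum>j<m. Pm i j) = 1" using stoch by (simp add: row_stochastic_def)
  have Aeq: "A i j = Pm i j * x j" for i j by (simp add: A_def x_def)
  have xpos: "x j > 0" if j: "j < m" for j
  proof -
    have dd: "degree_distribution (P j)" and rc: "rate_conditions (P j) (f j) (g j)"
      using degdist rates j by auto
    have tnn: "0 \<le> x_term (P j) (w j) (f j) (g j) d" for d
    proof (cases "d = 0")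
      case True then show ?thesis by (simp add: x_term_def)
    next
      case False
      have "P j d \<ge> 0" using dd by (simp add: degree_distribution_def)
      moreover have "w j d > 0" using wpos j by simp
      moreover have "f j d 1 \<ge> 0"
      proof -
        have "f j d 0 \<le> f j d 1" using rc False unfolding rate_conditions_def
          by (metis One_nat_def less_one linorder_not_le zero_le)
        then show ?thesis using rc unfolding rate_conditions_def by simp
      qed
      moreover have "g j d 0 > 0" using rc unfolding rate_conditions_def by blast
      ultimately show ?thesis unfolding x_term_def by (intro divide_nonneg_pos mult_nonneg_nonneg) auto
    qed
    obtain d where d: "1 \<le> d" "P j d > 0" "f j d 1 > 0" using rc unfolding rate_conditions_def by blast
    have "x_term (P j) (w j) (f j) (g j) d > 0"
      using d wpos j rc unfolding x_term_def rate_conditions_def by (intro divide_pos_pos mult_pos_pos) auto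
    then show ?thesis unfolding x_def xval_def
      using suminf_pos2[of "x_term (P j) (w j) (f j) (g j)", OF _ tnn] xfin j by blast
  qed
  have Ann: "\<forall>i<m. \<forall>j<m. A i j \<ge> 0" using Pnn xpos by (simp add: Aeq less_imp_le)
  obtain k where k: "\<forall>i<m. \<forall>j<m. mat_pow m Pm k i j > 0" using prim unfolding primitive_def by blast
  have powpos: "\<forall>i<m. \<forall>j<m. (mat_pow m Pm n i j > 0 \<longrightarrow> mat_pow m A n i j > 0) \<and> mat_pow m A n i j \<ge> 0 \<and> mat_pow m Pm n i j \<ge> 0" for n
  proof (induction n)
    case 0 then show ?case by simp
  next
    case (Suc n)
    show ?case
    proof (intro allI impI conjI)
      fix i j assume i: "i < m" and j: "j < m"
      show "mat_pow m A (Suc n) i j \<ge> 0" using Suc i Ann j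
        by (simp add: mat_mult_def, intro sum_nonneg mult_nonneg_nonneg) auto
      show "mat_pow m Pm (Suc n) i j \<ge> 0" using Suc i Pnn j
        by (simp add: mat_mult_def, intro sum_nonneg mult_nonneg_nonneg) auto
      assume "mat_pow m Pm (Suc n) i j > 0"
      then have "0 < (\<Sum>l<m. mat_pow m Pm n i l * Pm l j)" by (simp add: mat_mult_def)
      then obtain l where l: "l < m" "mat_pow m Pm n i l * Pm l j \<noteq> 0"
      proof -
        have "\<not> (\<forall>l\<in>{..<m}. mat_pow m Pm n i l * Pm l j = 0)"
        proof
          assume "\<forall>l\<in>{..<m}. mat_pow m Pm n i l * Pm l j = 0"
          then have "(\<Sum>l<m. mat_pow m Pm n i l * Pm l j) = 0" by (rule sum.neutral)
          then show False using \<open>0 < (\<Sum>l<m. mat_pow m Pm n i l * Pm l j)\<close> by simp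
        qed
        then show ?thesis using that by auto
      qed
      have a0: "mat_pow m Pm n i l \<ge> 0" using Suc i l by blast
      have a: "mat_pow m Pm n i l > 0" using l(2) a0 by (cases "mat_pow m Pm n i l = 0") auto
      have b0: "Pm l j \<ge> 0" using Pnn l j by blast
      have b: "Pm l j > 0" using l(2) b0 by (cases "Pm l j = 0") auto
      have a': "mat_pow m A n i l > 0" using Suc i l a by blast
      have b': "A l j > 0" using b xpos[OF j] by (simp add: Aeq)
      have c: "mat_pow m A n i l * A l j > 0" using a' b' by simp
      have "mat_pow m A n i l * A l j \<le> (\<Sum>l<m. mat_pow m A n i l * A l j)"
        by (rule member_le_sum) (use l Suc i j Ann in \<open>auto intro!: mult_nonneg_nonneg\<close>)
      then show "mat_pow m A (Suc n) i j > 0" using c by (simp add: mat_mult_def)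
    qed
  qed
  have Ak: "\<forall>i<m. \<forall>j<m. mat_pow m A k i j > 0" using powpos k by blast
  have four: "diffusion_small_seed m A"
    if S1: "S \<noteq> {}" and S2: "S \<subseteq> {..<m}" and S3: "\<forall>i\<in>S. (\<Sum>j\<in>S. Pm i j * x j) > 1" for S
  proof -
    have "\<forall>i\<in>S. (\<Sum>j\<in>S. A i j) > 1" using S3 by (simp add: Aeq)
    then obtain v where "\<forall>i<m. 0 < v i \<and> v i < mv m A v i"
      using core[OF Ann Ak S1 S2] by blast
    then show ?thesis by (rule diffusion_from_vec)
  qed
  have one: "diffusion_small_seed m A" if all: "\<forall>i<m. x i > 1"
  proof (rule four[of "{..<m}"])
    show "{..<m} \<noteq> {}" using m_pos by (metis lessThan_iff less_le_trans zero_less_one emptyE)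
    show "\<forall>i\<in>{..<m}. 1 < (\<Sum>j\<in>{..<m}. Pm i j * x j)"
    proof
      fix i assume "i \<in> {..<m}" then have i: "i < m" by simp
      have "\<exists>j\<in>{..<m}. Pm i j \<noteq> 0"
      proof (rule ccontr)
        assume "\<not> ?thesis" then have "(\<Sum>j<m. Pm i j) = 0" by simp
        then show False using Psum[OF i] by simp
      qed
      then obtain j where j: "j < m" "Pm i j \<noteq> 0" by auto
      have "(\<Sum>j<m. Pm i j) < (\<Sum>j<m. Pm i j * x j)"
      proof (rule sum_strict_mono_ex1)
        show "\<forall>l\<in>{..<m}. Pm i l \<le> Pm i l * x l"
        proof
          fix l assume "l \<in> {..<m}" then have l: "l < m" by simp
          have "Pm i l * 1 \<le> Pm i l * x l"
            using Pnn i l all by (intro mult_left_mono) (auto simp: less_imp_le)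
          then show "Pm i l \<le> Pm i l * x l" by simp
        qed
        have "Pm i j > 0" using Pnn i j by (simp add: less_le)
        then show "\<exists>l\<in>{..<m}. Pm i l < Pm i l * x l" proof (intro bexI[of _ j])
          have "Pm i j * 1 < Pm i j * x j" using \<open>Pm i j > 0\<close> all j by (intro mult_strict_left_mono) auto
          then show "Pm i j < Pm i j * x j" by simp
        qed (use j in simp)
      qed simp
      then show "1 < (\<Sum>j\<in>{..<m}. Pm i j * x j)" using Psum[OF i] by simp
    qed
  qed simp
  have two: "\<not> diffusion_small_seed m A" if all: "\<forall>i<m. x i \<le> 1"
  proof
    assume "diffusion_small_seed m A"
    then obtain v where v: "\<forall>i<m. 0 < v i \<and> v i < 1 \<and> (\<Sum>j<m. A i j * v j) > v i"
      unfolding diffusion_small_seed_def using zero_less_one by blast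
    have ne: "v ` {..<m} \<noteq> {}" using m_pos by (metis image_is_empty lessThan_iff less_le_trans zero_less_one emptyE)
    have "Max (v ` {..<m}) \<in> v ` {..<m}" using ne by (intro Max_in) auto
    then obtain i0 where i0: "i0 < m" "v i0 = Max (v ` {..<m})" by auto
    have vle: "v j \<le> v i0" if "j < m" for j using i0 that by simp
    have "(\<Sum>j<m. A i0 j * v j) \<le> (\<Sum>j<m. Pm i0 j * v i0)"
    proof (rule sum_mono)
      fix j assume "j \<in> {..<m}" then have j: "j < m" by simp
      have "x j * v j \<le> 1 * v j" using all v j by (intro mult_right_mono) auto
      also have "\<dots> \<le> v i0" using vle[OF j] by simp
      finally have "x j * v j \<le> v i0" .
      then have "Pm i0 j * (x j * v j) \<le> Pm i0 j * v i0" using Pnn i0 j by (intro mult_left_mono) auto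
      then show "A i0 j * v j \<le> Pm i0 j * v i0" by (simp add: Aeq mult.assoc)
    qed
    also have "\<dots> = v i0" using Psum[OF i0(1)] by (simp add: sum_distrib_right[symmetric])
    finally have "(\<Sum>j<m. A i0 j * v j) \<le> v i0" .
    moreover have "(\<Sum>j<m. A i0 j * v j) > v i0" using v i0(1) by blast
    ultimately show False by linarith
  qed
  have three: "diffusion_small_seed m A" if ex: "\<exists>i<m. Pm i i * x i > 1"
  proof -
    obtain i where "i < m" "Pm i i * x i > 1" using ex by blast
    then show ?thesis by (intro four[of "{i}"]) auto
  qed
  show ?thesis using one two three four by blast
qed

end
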